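(* Let $n\ge1$ and $R=\mathbb{C}[x_{ij}:1\le i<j\le n+1]$. Let $X$ be the strictly upper triangular $(n+1)\times(n+1)$ matrix with $(i,j)$-entry $x_{ij}$ for $i<j$ and $0$ otherwise. Then the set of $2\times2$ minors of $X$ is a Gröbner basis of the ideal it generates with respect to the degree reverse lexicographic order induced by any total order of the variables.
   Context: Degree revlex order (for variables ordered $x_1>\dots>x_N$): $x^a>x^b$ if $\sum a_i>\sum b_i$, or the degrees are equal and the rightmost nonzero entry of $a-b$ is negative. *)

theory Defs
  imports Complex_Main "HOL-Library.Poly_Mapping"
begin

text \<open>Variables x_ij are indexed by pairs (i,j) with 1 \<le> i < j \<le> n+1.
  Monomials are finitely supported exponent vectors, polynomials are finitely
  supported coefficient functions on monomials (convolution product).\<close>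

type_synonym var = "nat \<times> nat"
type_synonym mon = "var \<Rightarrow>\<^sub>0 nat"
type_synonym cpoly = "mon \<Rightarrow>\<^sub>0 complex"

definition vars :: "nat \<Rightarrow> var set" where
  "vars n = {(i, j). 1 \<le> i \<and> i < j \<and> j \<le> n + 1}"

definition ring_R :: "nat \<Rightarrow> cpoly set" where
  "ring_R n = {f :: cpoly. \<forall>m :: mon \<in> Poly_Mapping.keys f. Poly_Mapping.keys m \<subseteq> vars n}"

definition var_poly :: "var \<Rightarrow> cpoly" where
  "var_poly v = Poly_Mapping.single (Poly_Mapping.single v 1) 1"

definition X_entry :: "nat \<Rightarrow> nat \<Rightarrow> cpoly" where
  "X_entry i j = (if i < j then var_poly (i, j) else 0)"

definition minors2 :: "nat \<Rightarrow> cpoly set" where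
  "minors2 n = {X_entry i j * X_entry k l - X_entry i l * X_entry k j | i k j l.
      1 \<le> i \<and> i < k \<and> k \<le> n + 1 \<and> 1 \<le> j \<and> j < l \<and> l \<le> n + 1}"

definition ideal_gen :: "nat \<Rightarrow> cpoly set \<Rightarrow> cpoly set" where
  "ideal_gen n G = {\<Sum>g\<in>H. q g * g | H q. finite H \<and> H \<subseteq> G \<and> (\<forall>g\<in>H. q g \<in> ring_R n)}"

definition mdeg :: "mon \<Rightarrow> nat" where
  "mdeg a = (\<Sum>v\<in>Poly_Mapping.keys a. Poly_Mapping.lookup a v)"

text \<open>Degree reverse lexicographic order; (u, w) \<in> gt means variable u > w.
  drl_gt gt a b means x^a > x^b: higher degree, or equal degree and the
  entry of a - b at the smallest variable where a, b differ is negative.\<close>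
definition drl_gt :: "var rel \<Rightarrow> mon \<Rightarrow> mon \<Rightarrow> bool" where
  "drl_gt gt a b \<longleftrightarrow> mdeg a > mdeg b \<or>
     (mdeg a = mdeg b \<and> (\<exists>v. Poly_Mapping.lookup a v < Poly_Mapping.lookup b v \<and>
        (\<forall>w. Poly_Mapping.lookup a w \<noteq> Poly_Mapping.lookup b w \<longrightarrow> w = v \<or> (w, v) \<in> gt)))"

definition lead_mon :: "var rel \<Rightarrow> cpoly \<Rightarrow> mon" where
  "lead_mon gt f = (THE m. m \<in> Poly_Mapping.keys f \<and> (\<forall>m' \<in> Poly_Mapping.keys f. m' \<noteq> m \<longrightarrow> drl_gt gt m m'))"

definition mon_dvd :: "mon \<Rightarrow> mon \<Rightarrow> bool" where
  "mon_dvd a b \<longleftrightarrow> (\<forall>v. Poly_Mapping.lookup a v \<le> Poly_Mapping.lookup b v)"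

definition is_groebner_basis :: "var rel \<Rightarrow> cpoly set \<Rightarrow> cpoly set \<Rightarrow> bool" where
  "is_groebner_basis gt G I \<longleftrightarrow> G \<subseteq> I \<and>
     (\<forall>f \<in> I. f \<noteq> 0 \<longrightarrow> (\<exists>g \<in> G. g \<noteq> 0 \<and> mon_dvd (lead_mon gt g) (lead_mon gt f)))"

end

theory Submission
  imports Defs
begin


definition Lf :: "mon \<Rightarrow> nat \<Rightarrow> nat" where
  "Lf m a = Sum_any (\<lambda>d. Poly_Mapping.lookup m (a, d))"
definition Rf :: "mon \<Rightarrow> nat \<Rightarrow> nat" where
  "Rf m b = Sum_any (\<lambda>a. Poly_Mapping.lookup m (a, b))"
definition sg :: "mon \<Rightarrow> (nat \<Rightarrow> nat) \<times> (nat \<Rightarrow> nat)" where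
  "sg m = (Lf m, Rf m)"
definition live :: "(nat \<Rightarrow> nat) \<times> (nat \<Rightarrow> nat) \<Rightarrow> bool" where
  "live s \<longleftrightarrow> (\<forall>c b. 0 < fst s c \<longrightarrow> 0 < snd s b \<longrightarrow> c < b)"
definition sigma :: "(nat \<Rightarrow> nat) \<times> (nat \<Rightarrow> nat) \<Rightarrow> cpoly \<Rightarrow> complex" where
  "sigma s f = Sum_any (\<lambda>m. if sg m = s then Poly_Mapping.lookup f m else 0)"
definition mon2 :: "var \<Rightarrow> var \<Rightarrow> mon" where
  "mon2 u w = Poly_Mapping.single u 1 + Poly_Mapping.single w 1"

lemma fin_row: "finite {d. Poly_Mapping.lookup m (a, d) \<noteq> 0}"
proof -
  have "{d. Poly_Mapping.lookup m (a, d) \<noteq> 0} \<subseteq> snd ` Poly_Mapping.keys m"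
    by (force simp: in_keys_iff image_iff)
  then show ?thesis by (rule finite_subset) simp
qed

lemma fin_col: "finite {a. Poly_Mapping.lookup m (a, b) \<noteq> 0}"
proof -
  have "{a. Poly_Mapping.lookup m (a, b) \<noteq> 0} \<subseteq> fst ` Poly_Mapping.keys m"
    by (force simp: in_keys_iff image_iff)
  then show ?thesis by (rule finite_subset) simp
qed

lemma Lf_add: "Lf (p + q) a = Lf p a + Lf q a"
  unfolding Lf_def lookup_add using Sum_any.distrib[OF fin_row[of p] fin_row[of q]] by blast

lemma Rf_add: "Rf (p + q) a = Rf p a + Rf q a"
  unfolding Rf_def lookup_add using Sum_any.distrib[OF fin_col[of p] fin_col[of q]] by blast

lemma sg_add_cong: "sg p = sg p' \<Longrightarrow> sg (t + p) = sg (t + p')"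
  by (simp add: sg_def fun_eq_iff Lf_add Rf_add)

lemma Lf_single: "Lf (Poly_Mapping.single (x, y) c) a = (if a = x then c else 0)"
proof -
  have "(\<lambda>d. Poly_Mapping.lookup (Poly_Mapping.single (x, y) c) (a, d)) =
        (\<lambda>d. if d = y then (if a = x then c else 0) else 0)" (is "_ = ?h")
    by (auto simp: lookup_single when_def)
  then have "Lf (Poly_Mapping.single (x, y) c) a = Sum_any ?h" by (simp only: Lf_def)
  then show ?thesis by simp
qed

lemma Rf_single: "Rf (Poly_Mapping.single (x, y) c) b = (if b = y then c else 0)"
proof -
  have "(\<lambda>a. Poly_Mapping.lookup (Poly_Mapping.single (x, y) c) (a, b)) =
        (\<lambda>a. if a = x then (if b = y then c else 0) else 0)" (is "_ = ?h")
    by (auto simp: lookup_single when_def)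
  then have "Rf (Poly_Mapping.single (x, y) c) b = Sum_any ?h" by (simp only: Rf_def)
  then show ?thesis by simp
qed

lemma sg_mon2_swap: "sg (mon2 (i, j) (k, l)) = sg (mon2 (i, l) (k, j))"
  by (simp add: sg_def mon2_def fun_eq_iff Lf_add Rf_add Lf_single Rf_single)

lemma Sum_any_ge:
  fixes g :: "'a \<Rightarrow> nat"
  assumes "finite {x. g x \<noteq> 0}"
  shows "g x \<le> Sum_any g"
proof (cases "g x = 0")
  case False
  then show ?thesis using assms
    by (simp add: Sum_any.expand_set member_le_sum)
qed simp

lemma Sum_any_pos:
  fixes g :: "'a \<Rightarrow> nat"
  assumes "0 < Sum_any g"
  shows "\<exists>x. 0 < g x"
proof (rule ccontr)
  assume "\<not> ?thesis"
  then have "g = (\<lambda>_. 0)" by auto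
  then show False using assms by simp
qed

lemma Sum_any_strict:
  fixes f g :: "'a \<Rightarrow> nat"
  assumes "finite {x. f x \<noteq> 0}" "finite {x. g x \<noteq> 0}"
    and "\<And>x. f x \<le> g x" and "f z < g z"
  shows "Sum_any f < Sum_any g"
proof -
  let ?A = "{x. f x \<noteq> 0} \<union> {x. g x \<noteq> 0} \<union> {z}"
  have fa: "finite ?A" using assms by simp
  have "Sum_any f = sum f ?A" by (rule Sum_any.expand_superset[OF fa]) auto
  moreover have "Sum_any g = sum g ?A" by (rule Sum_any.expand_superset[OF fa]) auto
  moreover have "sum f ?A < sum g ?A"
    by (rule sum_strict_mono_ex1[OF fa]) (use assms in auto)
  ultimately show ?thesis by simp
qed

lemma mdeg_Lf: "mdeg m = Sum_any (Lf m)"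
proof -
  have "mdeg m = Sum_any (Poly_Mapping.lookup m)"
  proof -
    have "{a. Poly_Mapping.lookup m a \<noteq> 0} = Poly_Mapping.keys m" by (auto simp: in_keys_iff)
    then show ?thesis by (simp add: mdeg_def Sum_any.expand_set)
  qed
  also have "Sum_any (Poly_Mapping.lookup m) = Sum_any (\<lambda>(a, d). Poly_Mapping.lookup m (a, d))"
    by simp
  also have "\<dots> = Sum_any (\<lambda>a. Sum_any (\<lambda>d. Poly_Mapping.lookup m (a, d)))"
    by (rule Sum_any.cartesian_product[symmetric, of "fst ` Poly_Mapping.keys m \<times> snd ` Poly_Mapping.keys m"])
       (force simp: in_keys_iff image_iff)+
  finally show ?thesis by (simp add: Lf_def[abs_def])
qed

lemma live_lt:
  assumes "live (sg m)" "0 < Poly_Mapping.lookup m (i, j)" "0 < Poly_Mapping.lookup m (k, l)"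
  shows "k < j"
proof -
  have "Poly_Mapping.lookup m (k, l) \<le> Lf m k" unfolding Lf_def by (rule Sum_any_ge[OF fin_row])
  moreover have "Poly_Mapping.lookup m (i, j) \<le> Rf m j" unfolding Rf_def by (rule Sum_any_ge[OF fin_col])
  ultimately show ?thesis using assms unfolding live_def sg_def by auto
qed

lemma lookup_mon2: "Poly_Mapping.lookup (mon2 u w) x = (if x = u then 1 else 0) + (if x = w then 1 else 0)"
  by (simp add: mon2_def lookup_add lookup_single when_def)



lemma sigma_fin: "finite {m. (if sg m = s then Poly_Mapping.lookup f m else 0) \<noteq> 0}"
  by (rule finite_subset[of _ "Poly_Mapping.keys f"]) (auto simp: in_keys_iff)

lemma sigma_add: "sigma s (f + g) = sigma s f + sigma s g"
proof -
  have "sigma s (f + g) = Sum_any (\<lambda>m. (if sg m = s then Poly_Mapping.lookup f m else 0) +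
          (if sg m = s then Poly_Mapping.lookup g m else 0))"
    unfolding sigma_def by (rule Sum_any.cong) (simp add: lookup_add)
  also have "\<dots> = sigma s f + sigma s g"
    unfolding sigma_def by (rule Sum_any.distrib[OF sigma_fin sigma_fin])
  finally show ?thesis .
qed

lemma sigma_zero: "sigma s 0 = 0"
  using sigma_add[of s 0 0] by simp

lemma sigma_diff: "sigma s (f - g) = sigma s f - sigma s g"
proof -
  have "sigma s f = sigma s (f - g) + sigma s g" using sigma_add[of s "f - g" g] by simp
  then show ?thesis by simp
qed

lemma sigma_sum: "sigma s (\<Sum>x\<in>H. F x) = (\<Sum>x\<in>H. sigma s (F x))"
  by (induct H rule: infinite_finite_induct) (simp_all add: sigma_zero sigma_add)

lemma sigma_single: "sigma s (Poly_Mapping.single u c) = (if sg u = s then c else 0)"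
proof -
  have "(\<lambda>m. if sg m = s then Poly_Mapping.lookup (Poly_Mapping.single u c) m else 0) =
        (\<lambda>m. if m = u then (if sg u = s then c else 0) else 0)" (is "_ = ?h")
    by (auto simp: lookup_single when_def)
  then have "sigma s (Poly_Mapping.single u c) = Sum_any ?h" by (simp only: sigma_def)
  then show ?thesis by simp
qed

lemma poly_expand: "(f::cpoly) = (\<Sum>t\<in>Poly_Mapping.keys f. Poly_Mapping.single t (Poly_Mapping.lookup f t))"
proof (rule poly_mapping_eqI)
  fix k
  have "(\<Sum>t\<in>Poly_Mapping.keys f. Poly_Mapping.lookup (Poly_Mapping.single t (Poly_Mapping.lookup f t)) k)
      = (\<Sum>t\<in>Poly_Mapping.keys f. if t = k then Poly_Mapping.lookup f k else 0)"
    by (rule sum.cong) (auto simp: lookup_single when_def)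
  also have "\<dots> = Poly_Mapping.lookup f k" by (simp add: in_keys_iff)
  finally show "Poly_Mapping.lookup f k = Poly_Mapping.lookup (\<Sum>t\<in>Poly_Mapping.keys f. Poly_Mapping.single t (Poly_Mapping.lookup f t)) k"
    by (simp add: lookup_sum)
qed

lemma sigma_mult_single:
  "sigma s (q * Poly_Mapping.single P 1) =
     (\<Sum>t\<in>Poly_Mapping.keys q. if sg (t + P) = s then Poly_Mapping.lookup q t else 0)"
proof -
  have "q * Poly_Mapping.single P 1 = (\<Sum>t\<in>Poly_Mapping.keys q. Poly_Mapping.single t (Poly_Mapping.lookup q t)) * Poly_Mapping.single P 1"
    using poly_expand[of q] by simp
  also have "\<dots> = (\<Sum>t\<in>Poly_Mapping.keys q. Poly_Mapping.single (t + P) (Poly_Mapping.lookup q t))"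
    by (simp add: sum_distrib_right mult_single)
  finally show ?thesis by (simp add: sigma_sum sigma_single)
qed

lemma X_prod: "i < j \<Longrightarrow> k < l \<Longrightarrow> X_entry i j * X_entry k l = Poly_Mapping.single (mon2 (i, j) (k, l)) 1"
  by (simp add: X_entry_def var_poly_def mult_single mon2_def)

lemma sigma_dead:
  assumes "live s" "j \<le> k"
  shows "sigma s (q * Poly_Mapping.single (mon2 (i, j) (k, l)) 1) = 0"
proof -
  have "sg (t + mon2 (i, j) (k, l)) \<noteq> s" for t
  proof
    assume h: "sg (t + mon2 (i, j) (k, l)) = s"
    have "0 < Poly_Mapping.lookup (t + mon2 (i, j) (k, l)) (i, j)"
         "0 < Poly_Mapping.lookup (t + mon2 (i, j) (k, l)) (k, l)"
      by (simp_all add: lookup_add lookup_mon2)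
    then have "k < j" using live_lt[of "t + mon2 (i, j) (k, l)" i j k l] h assms(1) by simp
    then show False using assms(2) by simp
  qed
  then show ?thesis by (simp add: sigma_mult_single)
qed

lemma sigma_minor:
  assumes "g \<in> minors2 n" "live s"
  shows "sigma s (q * g) = 0"
proof -
  obtain i k j l where g: "g = X_entry i j * X_entry k l - X_entry i l * X_entry k j"
    and c: "1 \<le> i" "i < k" "k \<le> n + 1" "1 \<le> j" "j < l" "l \<le> n + 1"
    using assms(1) unfolding minors2_def by blast
  have qg: "q * g = q * (X_entry i j * X_entry k l) - q * (X_entry i l * X_entry k j)"
    by (simp add: g right_diff_distrib)
  show ?thesis
  proof (cases "i < j \<and> k < l \<and> i < l \<and> k < j")
    case True
    have "sg (t + mon2 (i, j) (k, l)) = sg (t + mon2 (i, l) (k, j))" for t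
      by (rule sg_add_cong) (rule sg_mon2_swap)
    then show ?thesis using True by (simp add: qg X_prod sigma_diff sigma_mult_single)
  next
    case False
    then have z: "X_entry i l * X_entry k j = 0" using c by (auto simp: X_entry_def)
    show ?thesis
    proof (cases "i < j \<and> k < l")
      case True
      then have "j \<le> k" using False c by auto
      then show ?thesis using True z assms(2) by (simp add: qg X_prod sigma_dead)
    next
      case False
      then have "X_entry i j * X_entry k l = 0" by (auto simp: X_entry_def)
      then show ?thesis using z by (simp add: qg sigma_zero)
    qed
  qed
qed

lemma sigma_ideal:
  assumes "f \<in> ideal_gen n (minors2 n)" "live s"
  shows "sigma s f = 0"
proof -
  obtain H q where f: "f = (\<Sum>g\<in>H. q g * g)" and H: "H \<subseteq> minors2 n"
    using assms(1) unfolding ideal_gen_def by blast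
  show ?thesis unfolding f sigma_sum
    by (rule sum.neutral) (use H assms(2) sigma_minor in blast)
qed



definition QS :: "nat \<Rightarrow> mon set" where "QS n = {m. Poly_Mapping.keys m \<subseteq> vars n}"

lemma keys_mon_add: "Poly_Mapping.keys ((a::mon) + b) \<subseteq> Poly_Mapping.keys a \<union> Poly_Mapping.keys b"
  by (rule keys_add)

lemma keys_poly_diff: "Poly_Mapping.keys ((a::cpoly) - b) \<subseteq> Poly_Mapping.keys a \<union> Poly_Mapping.keys b"
  by (auto simp: in_keys_iff lookup_minus)

lemma QS_add: "a \<in> QS n \<Longrightarrow> b \<in> QS n \<Longrightarrow> a + b \<in> QS n"
  using keys_mon_add[of a b] by (auto simp: QS_def)

lemma keys_mult_QS:
  assumes "Poly_Mapping.keys (p::cpoly) \<subseteq> QS n" "Poly_Mapping.keys q \<subseteq> QS n"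
  shows "Poly_Mapping.keys (p * q) \<subseteq> QS n"
  using keys_mult[of p q] assms QS_add by blast

lemma minor_keys:
  assumes "g \<in> minors2 n"
  shows "Poly_Mapping.keys g \<subseteq> QS n"
proof -
  obtain i k j l where g: "g = X_entry i j * X_entry k l - X_entry i l * X_entry k j"
    and c: "1 \<le> i" "i < k" "k \<le> n + 1" "1 \<le> j" "j < l" "l \<le> n + 1"
    using assms(1) unfolding minors2_def by blast
  have X: "Poly_Mapping.keys (X_entry a b) \<subseteq> QS n" if "1 \<le> a" "b \<le> n + 1" for a b
  proof -
    have "Poly_Mapping.keys (Poly_Mapping.single (a, b) (1::nat)) \<subseteq> vars n" if "a < b"
      using that \<open>1 \<le> a\<close> \<open>b \<le> n + 1\<close> by (simp add: vars_def)
    then show ?thesis by (auto simp: X_entry_def var_poly_def QS_def)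
  qed
  have "Poly_Mapping.keys (X_entry i j * X_entry k l) \<subseteq> QS n"
    by (rule keys_mult_QS; rule X) (use c in auto)
  moreover have "Poly_Mapping.keys (X_entry i l * X_entry k j) \<subseteq> QS n"
    by (rule keys_mult_QS; rule X) (use c in auto)
  ultimately show ?thesis unfolding g using keys_poly_diff by blast
qed

lemma ideal_keys:
  assumes "f \<in> ideal_gen n (minors2 n)"
  shows "Poly_Mapping.keys f \<subseteq> QS n"
proof -
  obtain H q where f: "f = (\<Sum>g\<in>H. q g * g)" and H: "H \<subseteq> minors2 n"
    and q: "\<forall>g\<in>H. q g \<in> ring_R n"
    using assms(1) unfolding ideal_gen_def by blast
  have "Poly_Mapping.keys (q g * g) \<subseteq> QS n" if "g \<in> H" for g
  proof (rule keys_mult_QS)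
    show "Poly_Mapping.keys (q g) \<subseteq> QS n" using q that by (auto simp: ring_R_def QS_def)
    show "Poly_Mapping.keys g \<subseteq> QS n" using H that minor_keys by blast
  qed
  then show ?thesis unfolding f using keys_sum[of "\<lambda>g. q g * g" H] by blast
qed



locale ord_ctx =
  fixes n :: nat and gt :: "var rel"
  assumes tr: "trans gt" and irr: "irrefl gt" and tot: "total_on (vars n) gt"
begin

lemma gt_trans: "(x, y) \<in> gt \<Longrightarrow> (y, z) \<in> gt \<Longrightarrow> (x, z) \<in> gt"
  using tr by (auto dest: transD)

lemma gt_irr: "(x, x) \<notin> gt"
  using irr unfolding irrefl_def by blast

lemma gt_tot: "x \<in> vars n \<Longrightarrow> y \<in> vars n \<Longrightarrow> x \<noteq> y \<Longrightarrow> (x, y) \<in> gt \<or> (y, x) \<in> gt"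
  using tot by (auto simp: total_on_def)

lemma drl_asym: "drl_gt gt a b \<Longrightarrow> drl_gt gt b a \<Longrightarrow> False"
  unfolding drl_gt_def
proof (elim disjE conjE exE)
  fix u v
  assume u: "Poly_Mapping.lookup a u < Poly_Mapping.lookup b u"
    "\<forall>w. Poly_Mapping.lookup a w \<noteq> Poly_Mapping.lookup b w \<longrightarrow> w = u \<or> (w, u) \<in> gt"
  assume v: "Poly_Mapping.lookup b v < Poly_Mapping.lookup a v"
    "\<forall>w. Poly_Mapping.lookup b w \<noteq> Poly_Mapping.lookup a w \<longrightarrow> w = v \<or> (w, v) \<in> gt"
  have "u \<noteq> v" using u v by auto
  have "Poly_Mapping.lookup b u \<noteq> Poly_Mapping.lookup a u" using u(1) by simp
  then have "(u, v) \<in> gt" using v(2) \<open>u \<noteq> v\<close> by blast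
  have "Poly_Mapping.lookup a v \<noteq> Poly_Mapping.lookup b v" using v(1) by simp
  then have "(v, u) \<in> gt" using u(2) \<open>u \<noteq> v\<close> by blast
  with \<open>(u, v) \<in> gt\<close> show False using gt_trans[of u v u] gt_irr[of u] by blast
qed auto


lemma gt_min:
  assumes "finite D" "D \<noteq> {}" "D \<subseteq> vars n"
  shows "\<exists>v\<in>D. \<forall>w\<in>D. w = v \<or> (w, v) \<in> gt"
  using assms
proof (induct D rule: finite_ne_induct)
  case (singleton x)
  then show ?case by auto
next
  case (insert x F)
  then obtain u where u: "u \<in> F" "\<forall>w\<in>F. w = u \<or> (w, u) \<in> gt" by auto
  show ?case
  proof (cases "(x, u) \<in> gt")
    case True
    then show ?thesis using u by auto
  next
    case False
    have "x \<noteq> u" using insert u by auto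
    moreover have "x \<in> vars n" "u \<in> vars n" using insert u by auto
    ultimately have ux: "(u, x) \<in> gt" using False gt_tot[of x u] by blast
    show ?thesis
    proof (intro bexI[of _ x] ballI)
      fix w assume "w \<in> insert x F"
      then consider "w = x" | "w \<in> F" by blast
      then show "w = x \<or> (w, x) \<in> gt"
      proof cases
        case 2
        then have "w = u \<or> (w, u) \<in> gt" using u(2) by blast
        then show ?thesis
        proof
          assume "w = u" then show ?thesis using ux by simp
        next
          assume "(w, u) \<in> gt" then show ?thesis using ux gt_trans[of w u x] by blast
        qed
      qed simp
    qed simp
  qed
qed

definition Dset :: "mon \<Rightarrow> mon \<Rightarrow> var set" where
  "Dset a b = {w. Poly_Mapping.lookup a w \<noteq> Poly_Mapping.lookup b w}"

lemma Dset_keys: "Dset a b \<subseteq> Poly_Mapping.keys a \<union> Poly_Mapping.keys b"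
proof
  fix w assume "w \<in> Dset a b"
  then have "Poly_Mapping.lookup a w \<noteq> 0 \<or> Poly_Mapping.lookup b w \<noteq> 0" by (auto simp: Dset_def)
  then show "w \<in> Poly_Mapping.keys a \<union> Poly_Mapping.keys b" by (simp add: in_keys_iff)
qed

lemma Dset_sub: "a \<in> QS n \<Longrightarrow> b \<in> QS n \<Longrightarrow> Dset a b \<subseteq> vars n"
  using Dset_keys[of a b] unfolding QS_def by blast

lemma drl_intro: "mdeg a = mdeg b \<Longrightarrow> Poly_Mapping.lookup a v < Poly_Mapping.lookup b v \<Longrightarrow>
   (\<forall>w. Poly_Mapping.lookup a w \<noteq> Poly_Mapping.lookup b w \<longrightarrow> w = v \<or> (w, v) \<in> gt) \<Longrightarrow> drl_gt gt a b"
  unfolding drl_gt_def by blast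

lemma Dset_fin: "finite (Dset a b)"
  by (rule finite_subset[OF Dset_keys]) simp

lemma Dset_ne: "a \<noteq> b \<Longrightarrow> Dset a b \<noteq> {}"
proof
  assume "a \<noteq> b" "Dset a b = {}"
  then have "\<And>w. Poly_Mapping.lookup a w = Poly_Mapping.lookup b w" unfolding Dset_def by blast
  then have "a = b" by (rule poly_mapping_eqI)
  then show False using \<open>a \<noteq> b\<close> by simp
qed

lemma drl_total:
  assumes "a \<in> QS n" "b \<in> QS n" "a \<noteq> b"
  shows "drl_gt gt a b \<or> drl_gt gt b a"
proof (cases "mdeg a = mdeg b")
  case True
  obtain v where v: "v \<in> Dset a b" "\<forall>w\<in>Dset a b. w = v \<or> (w, v) \<in> gt"
    using gt_min[OF Dset_fin Dset_ne[OF assms(3)] Dset_sub[OF assms(1,2)]] by blast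
  show ?thesis
  proof (cases "Poly_Mapping.lookup a v < Poly_Mapping.lookup b v")
    case True
    have "drl_gt gt a b"
      by (rule drl_intro[OF \<open>mdeg a = mdeg b\<close> True]) (use v(2) in \<open>simp add: Dset_def\<close>)
    then show ?thesis by blast
  next
    case False
    then have lt: "Poly_Mapping.lookup b v < Poly_Mapping.lookup a v" using v(1) by (simp add: Dset_def)
    have "drl_gt gt b a"
      by (rule drl_intro[OF \<open>mdeg a = mdeg b\<close>[symmetric] lt]) (use v(2) in \<open>simp add: Dset_def eq_commute\<close>)
    then show ?thesis by blast
  qed
next
  case False
  then have "mdeg a > mdeg b \<or> mdeg b > mdeg a" by arith
  then show ?thesis unfolding drl_gt_def by blast
qed

lemma drl_deg: "drl_gt gt a b \<Longrightarrow> mdeg b \<le> mdeg a"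
  unfolding drl_gt_def by (erule disjE) simp_all

lemma drl_ex: "drl_gt gt a b \<Longrightarrow> mdeg a = mdeg b \<Longrightarrow> \<exists>v. Poly_Mapping.lookup a v < Poly_Mapping.lookup b v \<and>
      (\<forall>w. Poly_Mapping.lookup a w \<noteq> Poly_Mapping.lookup b w \<longrightarrow> w = v \<or> (w, v) \<in> gt)"
  unfolding drl_gt_def by simp

lemma drl_trans:
  assumes "a \<in> QS n" "b \<in> QS n" "c \<in> QS n" "drl_gt gt a b" "drl_gt gt b c"
  shows "drl_gt gt a c"
proof (cases "mdeg a = mdeg b \<and> mdeg b = mdeg c")
  case False
  then have "mdeg c < mdeg a" using drl_deg[OF assms(4)] drl_deg[OF assms(5)] by linarith
  then show ?thesis unfolding drl_gt_def by (rule disjI1)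
next
  case True
  obtain v1 v2 where
    v1: "Poly_Mapping.lookup a v1 < Poly_Mapping.lookup b v1"
      "\<forall>w. Poly_Mapping.lookup a w \<noteq> Poly_Mapping.lookup b w \<longrightarrow> w = v1 \<or> (w, v1) \<in> gt" and
    v2: "Poly_Mapping.lookup b v2 < Poly_Mapping.lookup c v2"
      "\<forall>w. Poly_Mapping.lookup b w \<noteq> Poly_Mapping.lookup c w \<longrightarrow> w = v2 \<or> (w, v2) \<in> gt"
    using drl_ex[OF assms(4)] drl_ex[OF assms(5)] True by blast
  have "v1 \<in> Dset a b" using v1(1) by (simp add: Dset_def)
  then have "v1 \<in> vars n" using Dset_sub[OF assms(1,2)] by blast
  have "v2 \<in> Dset b c" using v2(1) by (simp add: Dset_def)
  then have "v2 \<in> vars n" using Dset_sub[OF assms(2,3)] by blast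
  have cases: "v1 = v2 \<or> (v1, v2) \<in> gt \<or> (v2, v1) \<in> gt"
    using gt_tot[OF \<open>v1 \<in> vars n\<close> \<open>v2 \<in> vars n\<close>] by blast
  show ?thesis
  proof -
    consider "v1 = v2" | "(v2, v1) \<in> gt" | "(v1, v2) \<in> gt" using cases by blast
    then show ?thesis
    proof cases
      case 1
      show ?thesis
      proof (rule drl_intro[of _ _ v1]; (intro allI impI)?)
        show "mdeg a = mdeg c" using True by simp
        show "Poly_Mapping.lookup a v1 < Poly_Mapping.lookup c v1" using v1(1) v2(1) 1 by simp
        fix w assume "Poly_Mapping.lookup a w \<noteq> Poly_Mapping.lookup c w"
        then have "Poly_Mapping.lookup a w \<noteq> Poly_Mapping.lookup b w \<or> Poly_Mapping.lookup b w \<noteq> Poly_Mapping.lookup c w" by auto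
        then show "w = v1 \<or> (w, v1) \<in> gt" using v1(2) v2(2) 1 by blast
      qed
    next
      case 2
      have "v1 \<noteq> v2"
      proof
        assume "v1 = v2"
        then have "(v1, v1) \<in> gt" using \<open>(v2, v1) \<in> gt\<close> by simp
        then show False using gt_irr[of v1] by blast
      qed
      have eq: "Poly_Mapping.lookup b v1 = Poly_Mapping.lookup c v1"
      proof (rule ccontr)
        assume "Poly_Mapping.lookup b v1 \<noteq> Poly_Mapping.lookup c v1"
        then have "(v1, v2) \<in> gt \<and> (v2, v1) \<in> gt" using v2(2) 2 \<open>v1 \<noteq> v2\<close> by blast
        then show False using gt_irr[of v1] gt_trans[of v1 v2 v1] by blast
      qed
      show ?thesis
      proof (rule drl_intro[of _ _ v1]; (intro allI impI)?)
        show "mdeg a = mdeg c" using True by simp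
        show "Poly_Mapping.lookup a v1 < Poly_Mapping.lookup c v1" using v1(1) eq by simp
        fix w assume "Poly_Mapping.lookup a w \<noteq> Poly_Mapping.lookup c w"
        then have "Poly_Mapping.lookup a w \<noteq> Poly_Mapping.lookup b w \<or> Poly_Mapping.lookup b w \<noteq> Poly_Mapping.lookup c w" by auto
        then show "w = v1 \<or> (w, v1) \<in> gt"
        proof
          assume "Poly_Mapping.lookup a w \<noteq> Poly_Mapping.lookup b w" then show ?thesis using v1(2) by blast
        next
          assume "Poly_Mapping.lookup b w \<noteq> Poly_Mapping.lookup c w"
          then have "w = v2 \<or> (w, v2) \<in> gt" using v2(2) by blast
          then show ?thesis using 2 gt_trans[of w v2 v1] by blast
        qed
      qed
    next
      case 3
      have "v1 \<noteq> v2"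
      proof
        assume "v1 = v2"
        then have "(v1, v1) \<in> gt" using \<open>(v1, v2) \<in> gt\<close> by simp
        then show False using gt_irr[of v1] by blast
      qed
      have eq: "Poly_Mapping.lookup a v2 = Poly_Mapping.lookup b v2"
      proof (rule ccontr)
        assume "Poly_Mapping.lookup a v2 \<noteq> Poly_Mapping.lookup b v2"
        then have "(v1, v2) \<in> gt \<and> (v2, v1) \<in> gt" using v1(2) 3 \<open>v1 \<noteq> v2\<close> by blast
        then show False using gt_irr[of v1] gt_trans[of v1 v2 v1] by blast
      qed
      show ?thesis
      proof (rule drl_intro[of _ _ v2]; (intro allI impI)?)
        show "mdeg a = mdeg c" using True by simp
        show "Poly_Mapping.lookup a v2 < Poly_Mapping.lookup c v2" using v2(1) eq by simp
        fix w assume "Poly_Mapping.lookup a w \<noteq> Poly_Mapping.lookup c w"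
        then have "Poly_Mapping.lookup a w \<noteq> Poly_Mapping.lookup b w \<or> Poly_Mapping.lookup b w \<noteq> Poly_Mapping.lookup c w" by auto
        then show "w = v2 \<or> (w, v2) \<in> gt"
        proof
          assume "Poly_Mapping.lookup b w \<noteq> Poly_Mapping.lookup c w" then show ?thesis using v2(2) by blast
        next
          assume "Poly_Mapping.lookup a w \<noteq> Poly_Mapping.lookup b w"
          then have "w = v1 \<or> (w, v1) \<in> gt" using v1(2) by blast
          then show ?thesis using 3 gt_trans[of w v1 v2] by blast
        qed
      qed
    qed
  qed
qed

lemma max_exists:
  assumes "finite K" "K \<noteq> {}" "K \<subseteq> QS n"
  shows "\<exists>M\<in>K. \<forall>m\<in>K. m \<noteq> M \<longrightarrow> drl_gt gt M m"
  using assms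
proof (induct K rule: finite_ne_induct)
  case (singleton x)
  then show ?case by auto
next
  case (insert x F)
  then obtain u where u: "u \<in> F" "\<forall>m\<in>F. m \<noteq> u \<longrightarrow> drl_gt gt u m" by auto
  have xq: "x \<in> QS n" and FQ: "F \<subseteq> QS n" using insert by auto
  show ?case
  proof (cases "drl_gt gt u x")
    case True
    then show ?thesis using u by auto
  next
    case False
    have "x \<noteq> u" using insert u by auto
    then have ux: "drl_gt gt x u" using False drl_total[of x u] xq FQ u by auto
    have "\<forall>m\<in>insert x F. m \<noteq> x \<longrightarrow> drl_gt gt x m"
    proof (intro ballI impI)
      fix m assume "m \<in> insert x F" "m \<noteq> x"
      then have "m \<in> F" by auto
      show "drl_gt gt x m"
      proof (cases "m = u")
        case True then show ?thesis using ux by simp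
      next
        case False
        then have "drl_gt gt u m" using u \<open>m \<in> F\<close> by blast
        moreover have "u \<in> QS n" "m \<in> QS n" using u \<open>m \<in> F\<close> FQ by auto
        ultimately show ?thesis using drl_trans[OF xq _ _ ux] by blast
      qed
    qed
    then show ?thesis by auto
  qed
qed

lemma lead_mon_eq:
  assumes "M \<in> Poly_Mapping.keys f" "\<forall>m\<in>Poly_Mapping.keys f. m \<noteq> M \<longrightarrow> drl_gt gt M m"
  shows "lead_mon gt f = M"
  unfolding lead_mon_def
proof (rule the_equality)
  show "M \<in> Poly_Mapping.keys f \<and> (\<forall>m'\<in>Poly_Mapping.keys f. m' \<noteq> M \<longrightarrow> drl_gt gt M m')"
    using assms by blast
  fix m assume m: "m \<in> Poly_Mapping.keys f \<and> (\<forall>m'\<in>Poly_Mapping.keys f. m' \<noteq> m \<longrightarrow> drl_gt gt m m')"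
  show "m = M"
  proof (rule ccontr)
    assume "m \<noteq> M"
    then have "drl_gt gt M m" "drl_gt gt m M" using m assms by auto
    then show False by (rule drl_asym)
  qed
qed

lemma lead_mon_prop:
  assumes "f \<noteq> 0" "Poly_Mapping.keys f \<subseteq> QS n"
  shows "lead_mon gt f \<in> Poly_Mapping.keys f \<and>
    (\<forall>m\<in>Poly_Mapping.keys f. m \<noteq> lead_mon gt f \<longrightarrow> drl_gt gt (lead_mon gt f) m)"
proof -
  obtain M where "M \<in> Poly_Mapping.keys f" "\<forall>m\<in>Poly_Mapping.keys f. m \<noteq> M \<longrightarrow> drl_gt gt M m"
    using max_exists[of "Poly_Mapping.keys f"] assms by auto
  then show ?thesis using lead_mon_eq by simp
qed

end



lemma keys_single_diff:
  assumes "A \<noteq> B"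
  shows "Poly_Mapping.keys (Poly_Mapping.single A (1::complex) - Poly_Mapping.single B 1) = {A, B}"
  using assms by (auto simp: in_keys_iff lookup_minus lookup_single when_def split: if_splits)

lemma mon2_comm: "mon2 u w = mon2 w u"
  by (simp add: mon2_def add.commute)

lemma keys_mon2: "u \<noteq> w \<Longrightarrow> Poly_Mapping.keys (mon2 u w) = {u, w}"
  by (auto simp: in_keys_iff lookup_mon2 split: if_splits)

lemma mdeg_mon2: "u \<noteq> w \<Longrightarrow> mdeg (mon2 u w) = 2"
  by (simp add: mdeg_def keys_mon2 lookup_mon2)

lemma mon_dvd_mon2:
  "u \<noteq> w \<Longrightarrow> 0 < Poly_Mapping.lookup M u \<Longrightarrow> 0 < Poly_Mapping.lookup M w \<Longrightarrow> mon_dvd (mon2 u w) M"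
  unfolding mon_dvd_def lookup_mon2 by auto

lemma lookup_mon2_diff:
  "Poly_Mapping.lookup (mon2 u1 u2) w \<noteq> Poly_Mapping.lookup (mon2 w1 w2) w \<Longrightarrow> w = u1 \<or> w = u2 \<or> w = w1 \<or> w = w2"
  by (auto simp: lookup_mon2 split: if_splits)

lemma vars_iff: "(i, j) \<in> vars n \<longleftrightarrow> 1 \<le> i \<and> i < j \<and> j \<le> n + 1"
  by (simp add: vars_def)

lemma AB_neq: "a \<noteq> c \<Longrightarrow> b \<noteq> d \<Longrightarrow> mon2 (a, b) (c, d) \<noteq> mon2 (a, d) (c, b)"
proof
  assume "a \<noteq> c" "b \<noteq> d" "mon2 (a, b) (c, d) = mon2 (a, d) (c, b)"
  then have "Poly_Mapping.lookup (mon2 (a, b) (c, d)) (a, b) = Poly_Mapping.lookup (mon2 (a, d) (c, b)) (a, b)"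
    by simp
  then show False using \<open>a \<noteq> c\<close> \<open>b \<noteq> d\<close> by (simp add: lookup_mon2)
qed

lemma minor_mem:
  "1 \<le> i \<Longrightarrow> i < k \<Longrightarrow> k \<le> n + 1 \<Longrightarrow> 1 \<le> j \<Longrightarrow> j < l \<Longrightarrow> l \<le> n + 1 \<Longrightarrow>
   X_entry i j * X_entry k l - X_entry i l * X_entry k j \<in> minors2 n"
  unfolding minors2_def by blast

lemma minor_exists:
  assumes "1 \<le> a" "1 \<le> c" "b \<le> n + 1" "d \<le> n + 1" "a < b" "c < d" "a < d" "c < b" "a \<noteq> c" "b \<noteq> d"
  shows "\<exists>g\<in>minors2 n. Poly_Mapping.keys g = {mon2 (a, b) (c, d), mon2 (a, d) (c, b)}"
proof -
  let ?A = "mon2 (a, b) (c, d)" and ?B = "mon2 (a, d) (c, b)"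
  have ne: "?A \<noteq> ?B" using AB_neq assms by blast
  have kAB: "Poly_Mapping.keys (Poly_Mapping.single ?A (1::complex) - Poly_Mapping.single ?B 1) = {?A, ?B}"
    using keys_single_diff[OF ne] .
  have kBA: "Poly_Mapping.keys (Poly_Mapping.single ?B (1::complex) - Poly_Mapping.single ?A 1) = {?A, ?B}"
    using keys_single_diff[OF ne[symmetric]] by auto
  consider "a < c" "b < d" | "a < c" "d < b" | "c < a" "b < d" | "c < a" "d < b"
    using assms(9,10) by linarith
  then show ?thesis
  proof cases
    case 1
    have "X_entry a b * X_entry c d - X_entry a d * X_entry c b \<in> minors2 n"
      by (rule minor_mem) (use assms 1 in auto)
    moreover have "X_entry a b * X_entry c d - X_entry a d * X_entry c b = Poly_Mapping.single ?A 1 - Poly_Mapping.single ?B 1"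
      using assms by (simp add: X_prod)
    ultimately show ?thesis using kAB by metis
  next
    case 2
    have "X_entry a d * X_entry c b - X_entry a b * X_entry c d \<in> minors2 n"
      by (rule minor_mem) (use assms 2 in auto)
    moreover have "X_entry a d * X_entry c b - X_entry a b * X_entry c d = Poly_Mapping.single ?B 1 - Poly_Mapping.single ?A 1"
      using assms by (simp add: X_prod)
    ultimately show ?thesis using kBA by metis
  next
    case 3
    have "X_entry c b * X_entry a d - X_entry c d * X_entry a b \<in> minors2 n"
      by (rule minor_mem) (use assms 3 in auto)
    moreover have "X_entry c b * X_entry a d - X_entry c d * X_entry a b = Poly_Mapping.single ?B 1 - Poly_Mapping.single ?A 1"
      using assms by (simp add: X_prod mon2_comm[of "(c, b)"] mon2_comm[of "(c, d)"])
    ultimately show ?thesis using kBA by metis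
  next
    case 4
    have "X_entry c d * X_entry a b - X_entry c b * X_entry a d \<in> minors2 n"
      by (rule minor_mem) (use assms 4 in auto)
    moreover have "X_entry c d * X_entry a b - X_entry c b * X_entry a d = Poly_Mapping.single ?A 1 - Poly_Mapping.single ?B 1"
      using assms by (simp add: X_prod mon2_comm[of "(c, b)"] mon2_comm[of "(c, d)"])
    ultimately show ?thesis using kAB by metis
  qed
qed

lemma mono_minor:
  assumes "1 \<le> a" "a < b" "b \<le> c" "c < d" "d \<le> n + 1"
  shows "Poly_Mapping.single (mon2 (a, b) (c, d)) 1 \<in> minors2 n"
proof -
  have "X_entry a b * X_entry c d - X_entry a d * X_entry c b \<in> minors2 n"
    by (rule minor_mem) (use assms in auto)
  moreover have "X_entry c b = 0" using assms by (simp add: X_entry_def)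
  ultimately show ?thesis using assms by (simp add: X_prod)
qed

context ord_ctx
begin

lemma binom_drl:
  assumes "(a, b) \<in> vars n" "(c, d) \<in> vars n" "a \<noteq> c" "b \<noteq> d"
    and ad: "((a, d), (a, b)) \<in> gt" and cb: "((c, b), (a, b)) \<in> gt"
  shows "drl_gt gt (mon2 (a, d) (c, b)) (mon2 (a, b) (c, d))"
proof -
  let ?A = "mon2 (a, b) (c, d)" and ?B = "mon2 (a, d) (c, b)"
  have deg: "mdeg ?B = mdeg ?A" using assms(3) by (simp add: mdeg_mon2)
  have neq: "(c, d) \<noteq> (a, b)" using assms(3) by simp
  have diff: "w = (a, d) \<or> w = (c, b) \<or> w = (a, b) \<or> w = (c, d)"
    if "Poly_Mapping.lookup ?B w \<noteq> Poly_Mapping.lookup ?A w" for w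
    using lookup_mon2_diff[OF that] by blast
  consider "((c, d), (a, b)) \<in> gt" | "((a, b), (c, d)) \<in> gt"
    using gt_tot[OF assms(2) assms(1) neq] by blast
  then show ?thesis
  proof cases
    case 1
    show ?thesis
    proof (rule drl_intro[OF deg, of "(a, b)"]; (intro allI impI)?)
      show "Poly_Mapping.lookup ?B (a, b) < Poly_Mapping.lookup ?A (a, b)"
        using assms(3,4) by (simp add: lookup_mon2)
      fix w assume "Poly_Mapping.lookup ?B w \<noteq> Poly_Mapping.lookup ?A w"
      then have "w = (a, d) \<or> w = (c, b) \<or> w = (a, b) \<or> w = (c, d)" by (rule diff)
      then show "w = (a, b) \<or> (w, (a, b)) \<in> gt" using ad cb 1 by blast
    qed
  next
    case 2
    show ?thesis
    proof (rule drl_intro[OF deg, of "(c, d)"]; (intro allI impI)?)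
      show "Poly_Mapping.lookup ?B (c, d) < Poly_Mapping.lookup ?A (c, d)"
        using assms(3,4) by (simp add: lookup_mon2)
      fix w assume "Poly_Mapping.lookup ?B w \<noteq> Poly_Mapping.lookup ?A w"
      then have "w = (a, d) \<or> w = (c, b) \<or> w = (a, b) \<or> w = (c, d)" by (rule diff)
      moreover have "((a, d), (c, d)) \<in> gt" using gt_trans[OF ad 2] .
      moreover have "((c, b), (c, d)) \<in> gt" using gt_trans[OF cb 2] .
      ultimately show "w = (c, d) \<or> (w, (c, d)) \<in> gt" using 2 by blast
    qed
  qed
qed

lemma lead_binom:
  assumes "Poly_Mapping.keys g = {A, B}" "A \<noteq> B" "drl_gt gt B A"
  shows "lead_mon gt g = B"
  by (rule lead_mon_eq) (use assms in auto)

end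



context ord_ctx
begin

lemma main:
  assumes fI: "f \<in> ideal_gen n (minors2 n)" and fne: "f \<noteq> 0"
  shows "\<exists>g\<in>minors2 n. g \<noteq> 0 \<and> mon_dvd (lead_mon gt g) (lead_mon gt f)"
proof (rule ccontr)
  assume "\<not> ?thesis"
  then have std: "\<And>g. g \<in> minors2 n \<Longrightarrow> g \<noteq> 0 \<Longrightarrow> \<not> mon_dvd (lead_mon gt g) (lead_mon gt f)"
    by blast
  define M where "M = lead_mon gt f"
  have KQ: "Poly_Mapping.keys f \<subseteq> QS n" by (rule ideal_keys[OF fI])
  have Mk: "M \<in> Poly_Mapping.keys f" and Mmax: "\<forall>m\<in>Poly_Mapping.keys f. m \<noteq> M \<longrightarrow> drl_gt gt M m"
    using lead_mon_prop[OF fne KQ] unfolding M_def by auto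
  have MQ: "M \<in> QS n" using Mk KQ by blast
  have Mvars: "(x, y) \<in> vars n" if "0 < Poly_Mapping.lookup M (x, y)" for x y
    using that MQ by (auto simp: QS_def in_keys_iff)
  have live: "live (sg M)"
    unfolding live_def sg_def fst_conv snd_conv
  proof (intro allI impI)
    fix c b assume Lc: "0 < Lf M c" and Rb: "0 < Rf M b"
    obtain d where d: "0 < Poly_Mapping.lookup M (c, d)" using Sum_any_pos[OF Lc[unfolded Lf_def]] by blast
    obtain a where a: "0 < Poly_Mapping.lookup M (a, b)" using Sum_any_pos[OF Rb[unfolded Rf_def]] by blast
    show "c < b"
    proof (rule ccontr)
      assume "\<not> c < b"
      then have bc: "b \<le> c" by simp
      have v1: "1 \<le> a" "a < b" "b \<le> n + 1" using Mvars[OF a] by (auto simp: vars_iff)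
      have v2: "1 \<le> c" "c < d" "d \<le> n + 1" using Mvars[OF d] by (auto simp: vars_iff)
      let ?g = "Poly_Mapping.single (mon2 (a, b) (c, d)) (1::complex)"
      have gm: "?g \<in> minors2 n" by (rule mono_minor) (use v1 v2 bc in auto)
      have kg: "Poly_Mapping.keys ?g = {mon2 (a, b) (c, d)}" by simp
      then have gne: "?g \<noteq> 0" using keys_eq_empty[of ?g] by (metis insert_not_empty)
      have "lead_mon gt ?g = mon2 (a, b) (c, d)" by (rule lead_mon_eq) (simp_all add: kg)
      moreover have "mon_dvd (mon2 (a, b) (c, d)) M"
        by (rule mon_dvd_mon2) (use a d bc v2 in auto)
      ultimately show False using std[OF gm gne] unfolding M_def by simp
    qed
  qed
  have sig0: "sigma (sg M) f = 0" by (rule sigma_ideal[OF fI live])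
  obtain m' where m': "m' \<in> Poly_Mapping.keys f" "m' \<noteq> M" "sg m' = sg M"
  proof -
    have "\<exists>m'. m' \<in> Poly_Mapping.keys f \<and> m' \<noteq> M \<and> sg m' = sg M"
    proof (rule ccontr)
      assume H: "\<not> ?thesis"
      have "(\<lambda>m. if sg m = sg M then Poly_Mapping.lookup f m else 0) =
                 (\<lambda>m. if m = M then Poly_Mapping.lookup f M else 0)"
      proof (rule ext)
        fix m
        show "(if sg m = sg M then Poly_Mapping.lookup f m else 0) = (if m = M then Poly_Mapping.lookup f M else 0)"
        proof (cases "m = M")
          case False
          then have "sg m = sg M \<Longrightarrow> Poly_Mapping.lookup f m = 0" using H by (auto simp: in_keys_iff)
          then show ?thesis using False by simp
        qed simp
      qed
      then have "sigma (sg M) f = Sum_any (\<lambda>m. if m = M then Poly_Mapping.lookup f M else 0)"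
        unfolding sigma_def by (rule arg_cong)
      then have "sigma (sg M) f = Poly_Mapping.lookup f M" by simp
      then show False using sig0 Mk by (simp add: in_keys_iff)
    qed
    then show ?thesis using that by blast
  qed
  have m'Q: "m' \<in> QS n" using m'(1) KQ by blast
  have LfE: "Lf m' = Lf M" and RfE: "Rf m' = Rf M" using m'(3) by (simp_all add: sg_def)
  have degE: "mdeg m' = mdeg M" by (simp add: mdeg_Lf LfE)
  obtain v where v: "v \<in> Dset m' M" "\<forall>w\<in>Dset m' M. w = v \<or> (w, v) \<in> gt"
    using gt_min[OF Dset_fin Dset_ne[OF m'(2)] Dset_sub[OF m'Q MQ]] by blast
  obtain a b where vab: "v = (a, b)" by (cases v)
  have vv: "v \<in> vars n" using v(1) Dset_sub[OF m'Q MQ] by blast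
  have above: "\<forall>w. Poly_Mapping.lookup m' w \<noteq> Poly_Mapping.lookup M w \<longrightarrow> w = v \<or> (w, v) \<in> gt"
    using v(2) by (simp add: Dset_def)
  have lt: "Poly_Mapping.lookup m' v < Poly_Mapping.lookup M v"
  proof (rule ccontr)
    assume "\<not> ?thesis"
    then have gt_v: "Poly_Mapping.lookup M (a, b) < Poly_Mapping.lookup m' (a, b)"
      using v(1) vab by (auto simp: Dset_def)
    have claim1: "\<exists>d. d \<noteq> b \<and> ((a, d), (a, b)) \<in> gt \<and> 0 < Poly_Mapping.lookup M (a, d)"
    proof (rule ccontr)
      assume H: "\<not> ?thesis"
      have le: "Poly_Mapping.lookup M (a, y) \<le> Poly_Mapping.lookup m' (a, y)" for y
      proof (cases "y = b")
        case True then show ?thesis using gt_v by simp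
      next
        case False
        show ?thesis
        proof (cases "Poly_Mapping.lookup m' (a, y) = Poly_Mapping.lookup M (a, y)")
          case False
          then have "(a, y) = v \<or> ((a, y), v) \<in> gt" using above by blast
          then have "((a, y), (a, b)) \<in> gt" using \<open>y \<noteq> b\<close> vab by simp
          moreover have "\<not> (y \<noteq> b \<and> ((a, y), (a, b)) \<in> gt \<and> 0 < Poly_Mapping.lookup M (a, y))"
            using H by (rule contrapos_nn) (rule exI)
          ultimately have "\<not> 0 < Poly_Mapping.lookup M (a, y)" using \<open>y \<noteq> b\<close> by simp
          then have "Poly_Mapping.lookup M (a, y) = 0" by simp
          then show ?thesis by simp
        qed simp
      qed
      have "Sum_any (\<lambda>y. Poly_Mapping.lookup M (a, y)) < Sum_any (\<lambda>y. Poly_Mapping.lookup m' (a, y))"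
        by (rule Sum_any_strict[where z = b]) (rule fin_row, rule fin_row, rule le, use gt_v in simp)
      then have "Lf M a < Lf m' a" unfolding Lf_def .
      then show False using LfE by simp
    qed
    have claim2: "\<exists>c. c \<noteq> a \<and> ((c, b), (a, b)) \<in> gt \<and> 0 < Poly_Mapping.lookup M (c, b)"
    proof (rule ccontr)
      assume H: "\<not> ?thesis"
      have le: "Poly_Mapping.lookup M (y, b) \<le> Poly_Mapping.lookup m' (y, b)" for y
      proof (cases "y = a")
        case True then show ?thesis using gt_v by simp
      next
        case False
        show ?thesis
        proof (cases "Poly_Mapping.lookup m' (y, b) = Poly_Mapping.lookup M (y, b)")
          case False
          then have "(y, b) = v \<or> ((y, b), v) \<in> gt" using above by blast
          then have "((y, b), (a, b)) \<in> gt" using \<open>y \<noteq> a\<close> vab by simp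
          moreover have "\<not> (y \<noteq> a \<and> ((y, b), (a, b)) \<in> gt \<and> 0 < Poly_Mapping.lookup M (y, b))"
            using H by (rule contrapos_nn) (rule exI)
          ultimately have "\<not> 0 < Poly_Mapping.lookup M (y, b)" using \<open>y \<noteq> a\<close> by simp
          then have "Poly_Mapping.lookup M (y, b) = 0" by simp
          then show ?thesis by simp
        qed simp
      qed
      have "Sum_any (\<lambda>y. Poly_Mapping.lookup M (y, b)) < Sum_any (\<lambda>y. Poly_Mapping.lookup m' (y, b))"
        by (rule Sum_any_strict[where z = a]) (rule fin_col, rule fin_col, rule le, use gt_v in simp)
      then have "Rf M b < Rf m' b" unfolding Rf_def .
      then show False using RfE by simp
    qed
    obtain d where d: "d \<noteq> b" "((a, d), (a, b)) \<in> gt" "0 < Poly_Mapping.lookup M (a, d)"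
      using claim1 by blast
    obtain c where c: "c \<noteq> a" "((c, b), (a, b)) \<in> gt" "0 < Poly_Mapping.lookup M (c, b)"
      using claim2 by blast
    have ad: "1 \<le> a" "a < d" "d \<le> n + 1" using Mvars[OF d(3)] by (auto simp: vars_iff)
    have cb: "1 \<le> c" "c < b" "b \<le> n + 1" using Mvars[OF c(3)] by (auto simp: vars_iff)
    have ab: "a < b" using vv vab by (simp add: vars_iff)
    have cd: "c < d" using live_lt[OF live d(3) c(3)] .
    have abv: "(a, b) \<in> vars n" and cdv: "(c, d) \<in> vars n"
      using ad cb ab cd by (auto simp: vars_iff)
    have drl: "drl_gt gt (mon2 (a, d) (c, b)) (mon2 (a, b) (c, d))"
      by (rule binom_drl[OF abv cdv]) (use c d in auto)
    have "\<exists>g\<in>minors2 n. Poly_Mapping.keys g = {mon2 (a, b) (c, d), mon2 (a, d) (c, b)}"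
      by (rule minor_exists) (use ad cb ab cd c d in auto)
    then obtain g where g: "g \<in> minors2 n" "Poly_Mapping.keys g = {mon2 (a, b) (c, d), mon2 (a, d) (c, b)}"
      by blast
    have ne: "mon2 (a, b) (c, d) \<noteq> mon2 (a, d) (c, b)" using AB_neq c(1) d(1) by metis
    have "lead_mon gt g = mon2 (a, d) (c, b)" by (rule lead_binom[OF g(2) ne drl])
    moreover have "g \<noteq> 0" using g(2) keys_eq_empty[of g] by (metis insert_not_empty)
    moreover have "mon_dvd (mon2 (a, d) (c, b)) M"
      by (rule mon_dvd_mon2) (use c d in auto)
    ultimately show False using std[OF g(1)] unfolding M_def by simp
  qed
  have "drl_gt gt m' M" by (rule drl_intro[OF degE lt above])
  moreover have "drl_gt gt M m'" using Mmax m'(1,2) by blast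
  ultimately show False by (rule drl_asym)
qed

end

lemma gen_in_ideal: assumes "g \<in> minors2 n" shows "g \<in> ideal_gen n (minors2 n)"
proof -
  have one: "(1::cpoly) \<in> ring_R n" by (simp add: ring_R_def)
  show ?thesis unfolding ideal_gen_def
    by (rule CollectI, rule exI[of _ "{g}"], rule exI[of _ "\<lambda>_. 1::cpoly"]) (use one assms in simp)
qed

theorem corollary6p5:
  fixes n :: nat and gt :: "var rel"
  assumes "n \<ge> 1"
    and "strict_linear_order_on (vars n) gt"
  shows "is_groebner_basis gt (minors2 n) (ideal_gen n (minors2 n))"
proof -
  have "trans gt" "irrefl gt" "total_on (vars n) gt"
    using assms(2) unfolding strict_linear_order_on_def by blast+
  then interpret ord_ctx n gt by unfold_locales
  show ?thesis unfolding is_groebner_basis_def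
  proof (intro conjI ballI impI subsetI)
    fix g assume "g \<in> minors2 n"
    then show "g \<in> ideal_gen n (minors2 n)" by (rule gen_in_ideal)
  next
    fix f assume "f \<in> ideal_gen n (minors2 n)" "f \<noteq> 0"
    then show "\<exists>g\<in>minors2 n. g \<noteq> 0 \<and> mon_dvd (lead_mon gt g) (lead_mon gt f)"
      by (rule main)
  qed
qed

end
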